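(* For integers $r,k\ge0$ and real $\alpha$ with $\alpha>k>r$, $$\sum_{n=1}^\infty\frac{H_{n+\alpha}^2+H_{n+\alpha}^{(2)}}{(n+r)(n+k)}=\frac{k-\alpha}{k-r}\left\{\frac{H_{\alpha-k}^3+3H_{\alpha-k}H_{\alpha-k}^{(2)}+2H_{\alpha-k}^{(3)}}{\alpha-k}-\sum_{j=1}^k\frac{H_{\alpha+j-k}^2+H_{\alpha+j-k}^{(2)}}{j(\alpha+j-k)}\right\}$$ $$+\frac{\alpha-r}{k-r}\left\{\frac{H_{\alpha-r}^3+3H_{\alpha-r}H_{\alpha-r}^{(2)}+2H_{\alpha-r}^{(3)}}{\alpha-r}-\sum_{j=1}^r\frac{H_{\alpha+j-r}^2+H_{\alpha+j-r}^{(2)}}{j(\alpha+j-r)}\right\}.$$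
   Context: Shifted harmonic numbers: for a real $\alpha$ that is not a negative integer, $H_\alpha := \sum_{k=1}^\infty\left(\frac1k-\frac1{k+\alpha}\right)$ and, for integers $m\ge 2$, $H_\alpha^{(m)} := \sum_{k=1}^\infty\left(\frac1{k^m}-\frac1{(k+\alpha)^m}\right)=\zeta(m)-\zeta(m,\alpha+1)$, where $\zeta$ is the Riemann zeta function and $\zeta(s,\alpha+1)=\sum_{n=1}^\infty (n+\alpha)^{-s}$ is the Hurwitz zeta function. Powers such as $H_\alpha^2$ mean $(H_\alpha)^2$. Empty sums are $0$. *)

theory Defs
  imports Complex_Main
begin

definition shifted_harm :: "nat \<Rightarrow> real \<Rightarrow> real" where
  "shifted_harm m \<alpha> = (\<Sum>k. 1 / (real (Suc k)) ^ m - 1 / (real (Suc k) + \<alpha>) ^ m)"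

abbreviation H :: "real \<Rightarrow> real" where
  "H \<alpha> \<equiv> shifted_harm 1 \<alpha>"

end

theory Submission imports Defs "HOL-Analysis.Analysis" "HOL-Real_Asymp.Real_Asymp"
begin


lemma inv_sq_summable: "summable (\<lambda>k. 1 / (real (Suc k))^2)"
proof -
  have "summable (\<lambda>n. inverse (real n ^ 2))" by (rule inverse_power_summable) simp
  hence "summable (\<lambda>n. inverse (real (Suc n) ^ 2))" by (subst summable_Suc_iff)
  thus ?thesis by (simp add: inverse_eq_divide)
qed

lemma sh_term_nonneg:
  assumes "y \<ge> 0" shows "0 \<le> 1 / (real (Suc k)) ^ m - 1 / (real (Suc k) + y) ^ m"
proof -
  have "(real (Suc k)) ^ m \<le> (real (Suc k) + y) ^ m" using assms by (intro power_mono) auto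
  thus ?thesis by (simp add: frac_le)
qed

lemma sh_term_mono:
  assumes "0 \<le> y" "y \<le> z" shows "1 / (real (Suc k)) ^ m - 1 / (real (Suc k) + y) ^ m \<le> 1 / (real (Suc k)) ^ m - 1 / (real (Suc k) + z) ^ m"
proof -
  have "(real (Suc k) + y) ^ m \<le> (real (Suc k) + z) ^ m" using assms by (intro power_mono) auto
  moreover have "0 < (real (Suc k) + y) ^ m" using assms by simp
  ultimately show ?thesis by (simp add: frac_le)
qed

lemma sh_summable:
  assumes "y \<ge> 0" "m \<ge> 1"
  shows "summable (\<lambda>k. 1 / (real (Suc k)) ^ m - 1 / (real (Suc k) + y) ^ m)"
proof (cases "m = 1")
  case True
  have sg: "summable (\<lambda>k. y * (1 / (real (Suc k))^2))" using inv_sq_summable by (rule summable_mult)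
  have le: "1 / (real (Suc k)) ^ m - 1 / (real (Suc k) + y) ^ m \<le> y * (1 / (real (Suc k))^2)" for k
  proof -
    have "1 / (real (Suc k)) ^ m - 1 / (real (Suc k) + y) ^ m = y / (real (Suc k) * (real (Suc k) + y))"
      using True assms by (simp add: field_simps)
    also have "\<dots> \<le> y / (real (Suc k) * real (Suc k))"
      using assms by (intro divide_left_mono mult_mono) auto
    finally show ?thesis by (simp add: power2_eq_square)
  qed
  show ?thesis
    by (rule summable_comparison_test'[OF sg]) (use le sh_term_nonneg[OF assms(1)] in \<open>simp del: of_nat_Suc\<close>)
next
  case False
  hence m2: "m \<ge> 2" using assms by simp
  have le: "1 / (real (Suc k)) ^ m - 1 / (real (Suc k) + y) ^ m \<le> 1 / (real (Suc k))^2" for k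
  proof -
    have "1 / (real (Suc k)) ^ m \<le> 1 / (real (Suc k))^2"
      using m2 by (intro divide_left_mono power_increasing) auto
    moreover have "0 \<le> 1 / (real (Suc k) + y) ^ m" using assms by simp
    ultimately show ?thesis by linarith
  qed
  show ?thesis
    by (rule summable_comparison_test'[OF inv_sq_summable]) (use le sh_term_nonneg[OF assms(1)] in \<open>simp del: of_nat_Suc\<close>)
qed

lemma sh_sums:
  assumes "y \<ge> 0" "m \<ge> 1"
  shows "(\<lambda>k. 1 / (real (Suc k)) ^ m - 1 / (real (Suc k) + y) ^ m) sums shifted_harm m y"
  unfolding shifted_harm_def using sh_summable[OF assms] by (rule summable_sums)

lemma sh_nonneg: "y \<ge> 0 \<Longrightarrow> m \<ge> 1 \<Longrightarrow> 0 \<le> shifted_harm m y"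
  unfolding shifted_harm_def by (intro suminf_nonneg sh_summable sh_term_nonneg)

lemma sh_mono: "0 \<le> y \<Longrightarrow> y \<le> z \<Longrightarrow> m \<ge> 1 \<Longrightarrow> shifted_harm m y \<le> shifted_harm m z"
  unfolding shifted_harm_def by (intro suminf_le sh_summable sh_term_mono) auto

lemma sh_zero [simp]: "shifted_harm m 0 = 0"
  unfolding shifted_harm_def by simp

lemma sh_le_const: "0 \<le> y \<Longrightarrow> shifted_harm 2 y \<le> (\<Sum>k. 1 / (real (Suc k))^2)"
  unfolding shifted_harm_def
  by (intro suminf_le sh_summable inv_sq_summable) (auto)

lemma sh_step:
  assumes "y \<ge> 0" "m \<ge> 1"
  shows "shifted_harm m (y + 1) = shifted_harm m y + 1 / (y + 1) ^ m"
proof -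
  define c where "c k = 1 / (real k + 1 + y) ^ m" for k
  have "c \<longlonglongrightarrow> 0" unfolding c_def using assms by real_asymp
  hence "(\<lambda>k. c k - c (Suc k)) sums (c 0 - 0)" by (rule telescope_sums')
  hence t: "(\<lambda>k. c k - c (Suc k)) sums (1 / (y+1)^m)" by (simp add: c_def add.commute)
  have "(\<lambda>k. (1 / (real (Suc k)) ^ m - 1 / (real (Suc k) + y) ^ m) + (c k - c (Suc k))) sums (shifted_harm m y + 1 / (y+1)^m)"
    by (intro sums_add sh_sums assms t)
  moreover have "(\<lambda>k. (1 / (real (Suc k)) ^ m - 1 / (real (Suc k) + y) ^ m) + (c k - c (Suc k))) =
     (\<lambda>k. 1 / (real (Suc k)) ^ m - 1 / (real (Suc k) + (y + 1)) ^ m)"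
    by (auto simp: c_def algebra_simps)
  ultimately have "(\<lambda>k. 1 / (real (Suc k)) ^ m - 1 / (real (Suc k) + (y + 1)) ^ m) sums (shifted_harm m y + 1 / (y+1)^m)" by simp
  moreover have "(\<lambda>k. 1 / (real (Suc k)) ^ m - 1 / (real (Suc k) + (y + 1)) ^ m) sums shifted_harm m (y+1)"
    using assms by (intro sh_sums) auto
  ultimately show ?thesis using sums_unique2 by blast
qed

lemma H_nat: "H (real n) = harm n"
proof (induction n)
  case (Suc n)
  have "H (real n + 1) = H (real n) + 1 / (real n + 1) ^ 1" by (rule sh_step) auto
  thus ?case using Suc by (simp add: harm_Suc inverse_eq_divide add.commute)
qed (simp add: harm_def)

lemma H_add_nat_le:
  assumes "y \<ge> 0" shows "H (y + real n) \<le> H y + harm n"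
proof (induction n)
  case (Suc n)
  have "H (y + real n + 1) = H (y + real n) + 1 / (y + real n + 1) ^ 1" using assms by (intro sh_step) auto
  also have "1 / (y + real n + 1) ^ 1 \<le> inverse (real (Suc n))" using assms by (simp add: inverse_eq_divide frac_le)
  finally show ?case using Suc by (simp add: harm_Suc add_ac)
qed (simp add: harm_def)



definition fH :: "real \<Rightarrow> real" where "fH y = H y ^ 2 + shifted_harm 2 y"
definition GH :: "real \<Rightarrow> real" where
  "GH y = H y ^ 3 + 3 * H y * shifted_harm 2 y + 2 * shifted_harm 3 y"

lemma H_nat' [simp]: "shifted_harm (Suc 0) (real n) = harm n"
  using H_nat[of n] by simp

lemma fH_step: assumes "0 \<le> y" shows "fH (y + 1) = fH y + 2 * H (y + 1) / (y + 1)"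
proof -
  define d where "d = 1 / (y + 1)"
  have e: "H (y+1) = H y + d" "shifted_harm 2 (y+1) = shifted_harm 2 y + d^2"
    using sh_step[OF assms, of 1] sh_step[OF assms, of 2]
    by (simp_all add: d_def power_one_over)
  have "2 * H (y + 1) / (y + 1) = 2 * d * H (y + 1)" by (simp add: d_def)
  thus ?thesis unfolding fH_def e by (simp add: algebra_simps power2_eq_square)
qed

lemma GH_step: assumes "0 \<le> y" shows "GH (y + 1) = GH y + 3 * fH (y + 1) / (y + 1)"
proof -
  define d where "d = 1 / (y + 1)"
  have e: "H (y+1) = H y + d" "shifted_harm 2 (y+1) = shifted_harm 2 y + d^2"
     "shifted_harm 3 (y+1) = shifted_harm 3 y + d^3"
    using sh_step[OF assms, of 1] sh_step[OF assms, of 2] sh_step[OF assms, of 3]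
    by (simp_all add: d_def power_one_over)
  have "3 * fH (y + 1) / (y + 1) = 3 * d * fH (y + 1)" by (simp add: d_def)
  thus ?thesis unfolding GH_def fH_def e by (simp add: algebra_simps power2_eq_square power3_eq_cube)
qed

lemma fH_0 [simp]: "fH 0 = 0" and GH_0 [simp]: "GH 0 = 0"
  by (simp_all add: fH_def GH_def)

lemma fH_nonneg: "0 \<le> y \<Longrightarrow> 0 \<le> fH y"
  unfolding fH_def using sh_nonneg[of y 2] by simp

lemma fH_mono: "0 \<le> y \<Longrightarrow> y \<le> z \<Longrightarrow> fH y \<le> fH z"
  unfolding fH_def using sh_mono[of y z 1] sh_mono[of y z 2] sh_nonneg[of y 1]
  by (intro add_mono power_mono) auto

lemma GH_mono: "0 \<le> y \<Longrightarrow> y \<le> z \<Longrightarrow> GH y \<le> GH z"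
proof -
  assume a: "0 \<le> y" "y \<le> z"
  have h1: "H y \<le> H z" "0 \<le> H y" and h2: "shifted_harm 2 y \<le> shifted_harm 2 z" "0 \<le> shifted_harm 2 y"
   and h3: "shifted_harm 3 y \<le> shifted_harm 3 z"
    using sh_mono[OF a, of 1] sh_mono[OF a, of 2] sh_mono[OF a, of 3] sh_nonneg[of y 1] sh_nonneg[of y 2] a by auto
  have "H y ^ 3 \<le> H z ^ 3" using h1 by (intro power_mono) auto
  moreover have "H y * shifted_harm 2 y \<le> H z * shifted_harm 2 z" using h1 h2 by (intro mult_mono) auto
  ultimately show ?thesis unfolding GH_def using h3 by linarith
qed

lemma harm_sqrt_lim: "(\<lambda>n. harm n / sqrt (real n)) \<longlonglongrightarrow> (0::real)"
proof -
  have eq: "(\<lambda>n. harm n / sqrt (real n)) = (\<lambda>n. (harm n - ln (real n)) * (1 / sqrt (real n)) + ln (real n) / sqrt (real n))"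
    by (rule ext) (simp add: add_divide_distrib[symmetric])
  have l1: "(\<lambda>n. 1 / sqrt (real n)) \<longlonglongrightarrow> 0" by real_asymp
  have l2: "(\<lambda>n. ln (real n) / sqrt (real n)) \<longlonglongrightarrow> 0" by real_asymp
  have "(\<lambda>n. (harm n - ln (real n)) * (1 / sqrt (real n)) + ln (real n) / sqrt (real n)) \<longlonglongrightarrow> euler_mascheroni * 0 + 0"
    by (intro tendsto_add tendsto_mult euler_mascheroni_LIMSEQ l1 l2)
  thus ?thesis unfolding eq by simp
qed

lemma H_over_n_lim: "(\<lambda>n. H (real n) / real n) \<longlonglongrightarrow> 0"
proof -
  have eq: "(\<lambda>n. H (real n) / real n) = (\<lambda>n. (harm n / sqrt (real n)) * (1 / sqrt (real n)))"
    by (auto simp: H_nat field_simps)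
  have l1: "(\<lambda>n. 1 / sqrt (real n)) \<longlonglongrightarrow> 0" by real_asymp
  show ?thesis unfolding eq using tendsto_mult[OF harm_sqrt_lim l1] by simp
qed

lemma fH_over_n_lim: "(\<lambda>n. fH (real n) / real n) \<longlonglongrightarrow> 0"
proof -
  define C where "C = (\<Sum>k. 1 / (real (Suc k))^2)"
  have eq: "(\<lambda>n. fH (real n) / real n) = (\<lambda>n. (harm n / sqrt (real n))^2 + shifted_harm 2 (real n) / real n)"
    by (auto simp: fH_def H_nat power_divide add_divide_distrib)
  have a: "(\<lambda>n. (harm n / sqrt (real n))^2) \<longlonglongrightarrow> 0" using tendsto_power[OF harm_sqrt_lim, of 2] by simp
  have b: "(\<lambda>n. shifted_harm 2 (real n) / real n) \<longlonglongrightarrow> 0"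
  proof (rule tendsto_sandwich[where f="\<lambda>_. 0" and h="\<lambda>n. C / real n"])
    show "\<forall>\<^sub>F n in sequentially. 0 \<le> shifted_harm 2 (real n) / real n"
      using sh_nonneg[of _ 2] by simp
    show "\<forall>\<^sub>F n in sequentially. shifted_harm 2 (real n) / real n \<le> C / real n"
      using sh_le_const unfolding C_def by (simp add: divide_right_mono)
    show "(\<lambda>n. C / real n) \<longlonglongrightarrow> 0" by real_asymp
  qed simp
  show ?thesis unfolding eq using tendsto_add[OF a b] by simp
qed

lemma squeeze:
  fixes A B g :: "real \<Rightarrow> real"
  assumes monoA: "\<And>y z. 0 \<le> y \<Longrightarrow> y \<le> z \<Longrightarrow> A y \<le> A z"
    and monoB: "\<And>y z. 0 \<le> y \<Longrightarrow> y \<le> z \<Longrightarrow> B y \<le> B z"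
    and stA: "\<And>y. 0 \<le> y \<Longrightarrow> A (y + 1) = A y + g (y + 1)"
    and stB: "\<And>y. 0 \<le> y \<Longrightarrow> B (y + 1) = B y + g (y + 1)"
    and z: "A 0 = B 0" and lim: "(\<lambda>n. g (real n)) \<longlonglongrightarrow> 0" and y: "0 \<le> y"
  shows "A y = B y"
proof -
  have per: "A (y + real n) - B (y + real n) = A y - B y" for n
  proof (induction n)
    case (Suc n)
    have "A (y + real (Suc n)) = A (y + real n) + g (y + real n + 1)"
      using stA[of "y + real n"] y by (simp add: add_ac)
    moreover have "B (y + real (Suc n)) = B (y + real n) + g (y + real n + 1)"
      using stB[of "y + real n"] y by (simp add: add_ac)
    ultimately show ?case using Suc by simp
  qed simp
  have nat: "A (real n) = B (real n)" for n
  proof (induction n)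
    case (Suc n)
    then show ?case using stA[of "real n"] stB[of "real n"] by (simp add: add_ac)
  qed (simp add: z)
  define j where "j = nat \<lfloor>y\<rfloor>"
  have j1: "real j \<le> y" and j2: "y \<le> real j + 1" using y unfolding j_def
    by (simp_all add: of_nat_nat)
  have bnd: "\<bar>A y - B y\<bar> \<le> g (real (n + (j + 1)))" for n
  proof -
    have e1: "A (real (n + (j+1))) = A (real (n + j)) + g (real (n + (j + 1)))"
      using stA[of "real (n+j)"] by (simp add: add_ac)
    have e2: "B (real (n + (j+1))) = B (real (n + j)) + g (real (n + (j + 1)))"
      using stB[of "real (n+j)"] by (simp add: add_ac)
    have "A (y + real n) \<le> A (real (n + (j+1)))" using j2 y by (intro monoA) auto
    moreover have "A (real (n + j)) \<le> A (y + real n)" using j1 by (intro monoA) auto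
    moreover have "B (y + real n) \<le> B (real (n + (j+1)))" using j2 y by (intro monoB) auto
    moreover have "B (real (n + j)) \<le> B (y + real n)" using j1 by (intro monoB) auto
    ultimately show ?thesis using per[of n] nat[of "n + j"] nat[of "n + (j+1)"] e1 e2 by linarith
  qed
  have "(\<lambda>n. g (real (n + (j + 1)))) \<longlonglongrightarrow> 0"
    using LIMSEQ_ignore_initial_segment[OF lim, of "j+1"] by simp
  hence "\<bar>A y - B y\<bar> \<le> 0" by (rule LIMSEQ_le_const) (use bnd in auto)
  thus ?thesis by simp
qed



definition L1 :: "real \<Rightarrow> nat \<Rightarrow> real" where
  "L1 y m = H (y + real (Suc m)) * (1 / real (Suc m) - 1 / (y + real (Suc m)))"

lemma a_lim:
  assumes "0 \<le> y" shows "(\<lambda>m. H (y + real (Suc m)) / (y + real (Suc m))) \<longlonglongrightarrow> 0"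
proof (rule tendsto_sandwich[where f="\<lambda>_. 0" and h="\<lambda>m. H y / real (Suc m) + H (real (Suc m)) / real (Suc m)"])
  show "\<forall>\<^sub>F m in sequentially. 0 \<le> H (y + real (Suc m)) / (y + real (Suc m))"
    using sh_nonneg[of _ 1] assms by (intro always_eventually allI divide_nonneg_nonneg) auto
  show "\<forall>\<^sub>F m in sequentially. H (y + real (Suc m)) / (y + real (Suc m)) \<le> H y / real (Suc m) + H (real (Suc m)) / real (Suc m)"
  proof (intro always_eventually allI)
    fix m
    have "H (y + real (Suc m)) \<le> H y + harm (Suc m)" by (rule H_add_nat_le[OF assms])
    moreover have "0 \<le> H (y + real (Suc m))" using assms by (intro sh_nonneg) auto
    ultimately have "H (y + real (Suc m)) / (y + real (Suc m)) \<le> (H y + harm (Suc m)) / real (Suc m)"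
      using assms by (intro frac_le) auto
    thus "H (y + real (Suc m)) / (y + real (Suc m)) \<le> H y / real (Suc m) + H (real (Suc m)) / real (Suc m)"
      by (simp only: H_nat add_divide_distrib)
  qed
  have "(\<lambda>m. H y / real (Suc m)) \<longlonglongrightarrow> 0" by real_asymp
  moreover have "(\<lambda>m. H (real (Suc m)) / real (Suc m)) \<longlonglongrightarrow> 0"
    using LIMSEQ_Suc[OF H_over_n_lim] by simp
  ultimately show "(\<lambda>m. H y / real (Suc m) + H (real (Suc m)) / real (Suc m)) \<longlonglongrightarrow> 0"
    using tendsto_add by fastforce
qed simp

lemma ring_id: "(h + u) * (a - u) - h * (a - b) = h * b - (h + u) * u + u * (a::real)"
  by (simp add: algebra_simps)

lemma L1_alg:
  fixes h t M y :: real
  assumes "t = y + M" "M > 0" "y \<ge> 0"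
  shows "(h + 1/(t+1)) * (1/M - 1/(t+1)) - h * (1/M - 1/t) = (h/t - (h + 1/(t+1))/(t+1)) + (1/M - 1/(M + (y+1)))/(y+1)"
proof -
  have nz: "M \<noteq> 0" "M+(y+1) \<noteq> 0" "y+1 \<noteq> 0" using assms by auto
  have k0: "1/M - 1/(M+(y+1)) = (y+1) * (1/(M+(y+1))*(1/M))"
    using nz by (simp add: field_simps)
  have k: "(1/M - 1/(M+(y+1)))/(y+1) = (1/(t+1))*(1/M)"
    unfolding k0 using nz assms(1) by (simp add: add_ac)
  have "(h + 1/(t+1)) * (1/M - 1/(t+1)) - h * (1/M - 1/t) = h*(1/t) - (h + 1/(t+1))*(1/(t+1)) + (1/(t+1))*(1/M)"
    using ring_id[of h "1/(t+1)" "1/M" "1/t"] .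
  thus ?thesis using k by simp
qed

lemma L1_diff_eq:
  assumes "0 \<le> y"
  shows "L1 (y + 1) m - L1 y m = (H (y + real (Suc m)) / (y + real (Suc m)) - H (y + real (Suc (Suc m))) / (y + real (Suc (Suc m))))
          + (1 / real (Suc m) - 1 / (real (Suc m) + (y + 1))) / (y + 1)"
proof -
  define t where "t = y + real (Suc m)"
  have t: "t > 0" "y + 1 + real (Suc m) = t + 1" "y + real (Suc (Suc m)) = t + 1"
     "real (Suc m) + (y + 1) = t + 1" using assms by (auto simp: t_def)
  have e: "H (t + 1) = H t + 1 / (t + 1)" using sh_step[of t 1] t by simp
  have "L1 (y + 1) m - L1 y m = (H t + 1/(t+1)) * (1/real (Suc m) - 1/(t+1)) - H t * (1/real (Suc m) - 1/t)"
    unfolding L1_def t_def[symmetric] t(2) e by simp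
  also have "\<dots> = (H t/t - (H t + 1/(t+1))/(t+1)) + (1/real (Suc m) - 1/(real (Suc m) + (y+1)))/(y+1)"
    by (rule L1_alg) (use assms in \<open>auto simp: t_def\<close>)
  finally show ?thesis unfolding t_def[symmetric] t(3) e .
qed

lemma L1_diff_sums:
  assumes "0 \<le> y"
  shows "(\<lambda>m. L1 (y + 1) m - L1 y m) sums (2 * H (y + 1) / (y + 1))"
proof -
  define a where "a m = H (y + real (Suc m)) / (y + real (Suc m))" for m
  have "(\<lambda>m. a m - a (Suc m)) sums (a 0 - 0)"
    by (rule telescope_sums') (unfold a_def, rule a_lim[OF assms])
  hence s1: "(\<lambda>m. a m - a (Suc m)) sums (H (y + 1) / (y + 1))" by (simp add: a_def)
  have "(\<lambda>k. 1 / (real (Suc k)) ^ 1 - 1 / (real (Suc k) + (y + 1)) ^ 1) sums H (y + 1)"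
    using assms by (intro sh_sums) auto
  hence s2: "(\<lambda>k. (1 / real (Suc k) - 1 / (real (Suc k) + (y + 1))) / (y + 1)) sums (H (y + 1) / (y + 1))"
    by (intro sums_divide) simp
  have "(\<lambda>m. (a m - a (Suc m)) + (1 / real (Suc m) - 1 / (real (Suc m) + (y + 1))) / (y + 1)) sums
     (H (y + 1) / (y + 1) + H (y + 1) / (y + 1))" by (rule sums_add[OF s1 s2])
  moreover have "(\<lambda>m. (a m - a (Suc m)) + (1 / real (Suc m) - 1 / (real (Suc m) + (y + 1))) / (y + 1))
      = (\<lambda>m. L1 (y + 1) m - L1 y m)"
    using L1_diff_eq[OF assms] by (auto simp: a_def)
  ultimately show ?thesis by simp
qed

lemma L1_nonneg: "0 \<le> y \<Longrightarrow> 0 \<le> L1 y m"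
  unfolding L1_def using sh_nonneg[of "y + real (Suc m)" 1]
  by (intro mult_nonneg_nonneg) (auto simp: frac_le)

lemma L1_mono:
  assumes "0 \<le> y" "y \<le> z" shows "L1 y m \<le> L1 z m"
  unfolding L1_def
proof (rule mult_mono)
  show "H (y + real (Suc m)) \<le> H (z + real (Suc m))" using assms by (intro sh_mono) auto
  show "1 / real (Suc m) - 1 / (y + real (Suc m)) \<le> 1 / real (Suc m) - 1 / (z + real (Suc m))"
    using assms by (simp add: frac_le)
  show "0 \<le> H (z + real (Suc m))" using assms by (intro sh_nonneg) auto
  show "0 \<le> 1 / real (Suc m) - 1 / (y + real (Suc m))" using assms by (simp add: frac_le)
qed

lemma L1_0 [simp]: "L1 0 m = 0"
  by (simp add: L1_def)

lemma L1_summable_nat: "summable (L1 (real n))"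
proof (induction n)
  case 0 then show ?case by simp
next
  case (Suc n)
  have "summable (\<lambda>m. L1 (real n) m + (L1 (real n + 1) m - L1 (real n) m))"
    using Suc L1_diff_sums[of "real n"] by (intro summable_add sums_summable) auto
  thus ?case by (simp add: add_ac)
qed

lemma L1_summable:
  assumes "0 \<le> y" shows "summable (L1 y)"
proof -
  define J where "J = nat \<lceil>y\<rceil>"
  have "y \<le> real J" unfolding J_def by linarith
  show ?thesis
    by (rule summable_comparison_test'[OF L1_summable_nat[of J]])
       (use L1_nonneg[OF assms] L1_mono[OF assms \<open>y \<le> real J\<close>] in simp)
qed

lemma level1:
  assumes "0 \<le> y" shows "L1 y sums fH y"
proof -
  define R where "R y = suminf (L1 y)" for y
  have "R y = fH y"
  proof (rule squeeze[where A=R and B=fH and g="\<lambda>t. 2 * H t / t"])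
    show "R y' \<le> R z" if "0 \<le> y'" "y' \<le> z" for y' z
      unfolding R_def using that by (intro suminf_le L1_mono L1_summable) auto
    show "fH y' \<le> fH z" if "0 \<le> y'" "y' \<le> z" for y' z using that by (rule fH_mono)
    show "R (y' + 1) = R y' + 2 * H (y' + 1) / (y' + 1)" if "0 \<le> y'" for y'
    proof -
      have "(\<lambda>m. L1 y' m + (L1 (y' + 1) m - L1 y' m)) sums (R y' + 2 * H (y' + 1) / (y' + 1))"
        unfolding R_def using that by (intro sums_add summable_sums L1_summable L1_diff_sums)
      thus ?thesis unfolding R_def by (simp add: sums_iff)
    qed
    show "fH (y' + 1) = fH y' + 2 * H (y' + 1) / (y' + 1)" if "0 \<le> y'" for y' using that by (rule fH_step)
    have "L1 0 = (\<lambda>_. 0)" by (rule ext) simp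
    thus "R 0 = fH 0" by (simp add: R_def)
    show "(\<lambda>n. 2 * H (real n) / real n) \<longlonglongrightarrow> 0"
      using tendsto_mult[OF tendsto_const[of 2] H_over_n_lim] by simp
  qed (rule assms)
  thus ?thesis using summable_sums[OF L1_summable[OF assms]] unfolding R_def by simp
qed



definition P2 :: "real \<Rightarrow> nat \<Rightarrow> real" where
  "P2 x m = (fH (x + real (Suc m)) - fH (real (Suc m))) / real (Suc m)"

lemma alg2:
  fixes h y M :: real assumes "y > 0" "M > 0"
  shows "2 * h / (y + M) / M = (2 / y) * (h * (1 / M - 1 / (y + M)))"
proof -
  have "1 / M - 1 / (y + M) = y / (M * (y + M))" using assms by (simp add: field_simps)
  thus ?thesis using assms by simp
qed

lemma P2_diff_eq:
  assumes "0 \<le> x"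
  shows "P2 (x + 1) m - P2 x m = (2 / (x + 1)) * L1 (x + 1) m"
proof -
  have e: "fH (x + real (Suc m) + 1) = fH (x + real (Suc m)) + 2 * H (x + real (Suc m) + 1) / (x + real (Suc m) + 1)"
    using assms by (intro fH_step) auto
  have e2: "x + 1 + real (Suc m) = x + real (Suc m) + 1" by simp
  have "P2 (x + 1) m - P2 x m = 2 * H (x + real (Suc m) + 1) / (x + real (Suc m) + 1) / real (Suc m)"
    unfolding P2_def e2 e by (simp add: diff_divide_distrib[symmetric])
  also have "\<dots> = (2 / (x + 1)) * L1 (x + 1) m"
    unfolding L1_def e2[symmetric] using assms alg2[of "x+1" "real (Suc m)" "H (x + 1 + real (Suc m))"] by simp
  finally show ?thesis .
qed

lemma P2_diff_sums:
  assumes "0 \<le> x" shows "(\<lambda>m. P2 (x + 1) m - P2 x m) sums (2 * fH (x + 1) / (x + 1))"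
proof -
  have "(\<lambda>m. (2 / (x + 1)) * L1 (x + 1) m) sums ((2 / (x + 1)) * fH (x + 1))"
    using assms by (intro sums_mult level1) auto
  thus ?thesis using P2_diff_eq[OF assms] by simp
qed

lemma P2_nonneg: "0 \<le> x \<Longrightarrow> 0 \<le> P2 x m"
  unfolding P2_def using fH_mono[of "real (Suc m)" "x + real (Suc m)"] by simp

lemma P2_mono: "0 \<le> x \<Longrightarrow> x \<le> z \<Longrightarrow> P2 x m \<le> P2 z m"
  unfolding P2_def using fH_mono[of "x + real (Suc m)" "z + real (Suc m)"]
  by (intro divide_right_mono) auto

lemma P2_0 [simp]: "P2 0 m = 0"
  by (simp add: P2_def)

lemma P2_summable_nat: "summable (P2 (real n))"
proof (induction n)
  case 0
  have "P2 0 = (\<lambda>_. 0)" by (rule ext) simp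
  then show ?case by simp
next
  case (Suc n)
  have "summable (\<lambda>m. P2 (real n) m + (P2 (real n + 1) m - P2 (real n) m))"
    using Suc P2_diff_sums[of "real n"] by (intro summable_add sums_summable) auto
  thus ?case by (simp add: add_ac)
qed

lemma P2_summable:
  assumes "0 \<le> x" shows "summable (P2 x)"
proof -
  define J where "J = nat \<lceil>x\<rceil>"
  have "x \<le> real J" unfolding J_def by linarith
  show ?thesis
    by (rule summable_comparison_test'[OF P2_summable_nat[of J]])
       (use P2_nonneg[OF assms] P2_mono[OF assms \<open>x \<le> real J\<close>] in simp)
qed

lemma level2:
  assumes "0 \<le> x" shows "P2 x sums (2/3 * GH x)"
proof -
  define S where "S y = suminf (P2 y)" for y
  have "S x = 2/3 * GH x"
  proof (rule squeeze[where A=S and B="\<lambda>x. 2/3 * GH x" and g="\<lambda>t. 2 * fH t / t"])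
    show "S y' \<le> S z" if "0 \<le> y'" "y' \<le> z" for y' z
      unfolding S_def using that by (intro suminf_le P2_mono P2_summable) auto
    show "2/3 * GH y' \<le> 2/3 * GH z" if "0 \<le> y'" "y' \<le> z" for y' z using GH_mono[OF that] by simp
    show "S (y' + 1) = S y' + 2 * fH (y' + 1) / (y' + 1)" if "0 \<le> y'" for y'
    proof -
      have "(\<lambda>m. P2 y' m + (P2 (y' + 1) m - P2 y' m)) sums (S y' + 2 * fH (y' + 1) / (y' + 1))"
        unfolding S_def using that by (intro sums_add summable_sums P2_summable P2_diff_sums)
      thus ?thesis unfolding S_def by (simp add: sums_iff)
    qed
    show "2/3 * GH (y' + 1) = 2/3 * GH y' + 2 * fH (y' + 1) / (y' + 1)" if "0 \<le> y'" for y'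
      using GH_step[OF that] by simp
    have "P2 0 = (\<lambda>_. 0)" by (rule ext) simp
    thus "S 0 = 2/3 * GH 0" by (simp add: S_def)
    show "(\<lambda>n. 2 * fH (real n) / real n) \<longlonglongrightarrow> 0"
      using tendsto_mult[OF tendsto_const[of 2] fH_over_n_lim] by simp
  qed (rule assms)
  thus ?thesis using summable_sums[OF P2_summable[OF assms]] unfolding S_def by (simp only:)
qed



definition Tsum :: "real \<Rightarrow> nat \<Rightarrow> real" where
  "Tsum z s = (\<Sum>j=1..s. fH (z + real j) / real j)"

lemma sumP2: "(\<Sum>i<s. P2 z i) = Tsum z s - Tsum 0 s"
  unfolding Tsum_def P2_def by (simp add: sum.atLeast1_atMost_eq sum_subtractf diff_divide_distrib add_ac)

lemma sumW: assumes "0 \<le> z" shows "(\<Sum>j=1..s. fH (z + real j) / (z + real j)) = (GH (z + real s) - GH z) / 3"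
proof (induction s)
  case (Suc s)
  have "GH (z + real s + 1) = GH (z + real s) + 3 * fH (z + real s + 1) / (z + real s + 1)"
    using assms by (intro GH_step) auto
  thus ?case using Suc by (simp add: add_ac field_simps)
qed simp

lemma stmt_sum:
  assumes "\<alpha> - real s = z" "z > 0"
  shows "z * (\<Sum>j=1..s. (H (\<alpha> + real j - real s) ^ 2 + shifted_harm 2 (\<alpha> + real j - real s)) / (real j * (\<alpha> + real j - real s)))
     = Tsum z s - (GH \<alpha> - GH z) / 3"
proof -
  have "z * (\<Sum>j=1..s. (H (\<alpha> + real j - real s) ^ 2 + shifted_harm 2 (\<alpha> + real j - real s)) / (real j * (\<alpha> + real j - real s)))
      = (\<Sum>j=1..s. fH (z + real j) / real j - fH (z + real j) / (z + real j))"
    unfolding sum_distrib_left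
  proof (rule sum.cong[OF refl])
    fix j assume j: "j \<in> {1..s}"
    have e: "\<alpha> + real j - real s = z + real j" using assms by simp
    have "real j > 0" "z + real j > 0" using j assms by auto
    thus "z * ((H (\<alpha> + real j - real s) ^ 2 + shifted_harm 2 (\<alpha> + real j - real s)) / (real j * (\<alpha> + real j - real s)))
        = fH (z + real j) / real j - fH (z + real j) / (z + real j)"
      unfolding e fH_def[symmetric] by (simp add: field_simps)
  qed
  also have "\<dots> = Tsum z s - (GH (z + real s) - GH z) / 3"
    unfolding sum_subtractf Tsum_def using sumW[of z s] assms by simp
  also have "z + real s = \<alpha>" using assms by simp
  finally show ?thesis .
qed

lemma tele_diff:
  fixes u :: "nat \<Rightarrow> real"
  assumes "u \<longlonglongrightarrow> 0"
  shows "(\<lambda>n. u (n + r) - u (n + (r + d))) sums ((\<Sum>i<r+d. u i) - (\<Sum>i<r. u i))"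
proof (induction d)
  case 0 then show ?case by simp
next
  case (Suc d)
  have "(\<lambda>n. u (n + (r + d))) \<longlonglongrightarrow> 0" using LIMSEQ_ignore_initial_segment[OF assms, of "r+d"] by simp
  hence "(\<lambda>n. u (n + (r + d)) - u (Suc n + (r + d))) sums (u (0 + (r + d)) - 0)"
    by (rule telescope_sums'[where f="\<lambda>n. u (n + (r + d))"])
  from sums_add[OF Suc this] show ?case by (simp add: add_ac add_diff_eq)
qed

lemma alg4: fixes y K G S :: real assumes "y \<noteq> 0" "K \<noteq> 0"
  shows "(- y) / K * (G / y - S) = 1 / K * (y * S - G)"
  using assms by (simp add: field_simps)

lemma alg5: fixes y K G S :: real assumes "y \<noteq> 0" "K \<noteq> 0"
  shows "y / K * (G / y - S) = 1 / K * (G - y * S)"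
  using assms by (simp add: field_simps)

lemma alg3:
  fixes F a b K :: real assumes "a > 0" "b > 0" "b - a = K" "K > 0"
  shows "1 / K * (F / a - F / b) = F / (a * b)"
proof -
  have "F / a - F / b = F * (b - a) / (a * b)" using assms by (simp add: field_simps)
  thus ?thesis using assms by simp
qed

theorem theorem2p6:
  fixes r k :: nat and \<alpha> :: real
  assumes "real k < \<alpha>" and "r < k"
  shows "(\<lambda>n. (H (real (Suc n) + \<alpha>) ^ 2 + shifted_harm 2 (real (Suc n) + \<alpha>))
              / ((real (Suc n) + real r) * (real (Suc n) + real k)))
         sums
         ((real k - \<alpha>) / (real k - real r) *
            ((H (\<alpha> - real k) ^ 3 + 3 * H (\<alpha> - real k) * shifted_harm 2 (\<alpha> - real k)
                + 2 * shifted_harm 3 (\<alpha> - real k)) / (\<alpha> - real k)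
             - (\<Sum>j=1..k. (H (\<alpha> + real j - real k) ^ 2 + shifted_harm 2 (\<alpha> + real j - real k))
                  / (real j * (\<alpha> + real j - real k))))
        + (\<alpha> - real r) / (real k - real r) *
            ((H (\<alpha> - real r) ^ 3 + 3 * H (\<alpha> - real r) * shifted_harm 2 (\<alpha> - real r)
                + 2 * shifted_harm 3 (\<alpha> - real r)) / (\<alpha> - real r)
             - (\<Sum>j=1..r. (H (\<alpha> + real j - real r) ^ 2 + shifted_harm 2 (\<alpha> + real j - real r))
                  / (real j * (\<alpha> + real j - real r)))))"
proof -
  define x where "x = \<alpha> - real r"
  define y where "y = \<alpha> - real k"
  define Sr where "Sr = (\<Sum>j=1..r. (H (\<alpha> + real j - real r) ^ 2 + shifted_harm 2 (\<alpha> + real j - real r))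
                  / (real j * (\<alpha> + real j - real r)))"
  define Sk where "Sk = (\<Sum>j=1..k. (H (\<alpha> + real j - real k) ^ 2 + shifted_harm 2 (\<alpha> + real j - real k))
                  / (real j * (\<alpha> + real j - real k)))"
  define u where "u m = fH (real (Suc m)) / real (Suc m)" for m
  define c where "c = 1 / (real k - real r)"
  have x0: "x > 0" and y0: "y > 0" and kr: "real k - real r > 0" using assms by (auto simp: x_def y_def)
  obtain d where d: "k = r + d" using assms less_imp_add_positive by blast
  have u0: "u \<longlonglongrightarrow> 0" unfolding u_def using LIMSEQ_Suc[OF fH_over_n_lim] by simp
  have s1: "(\<lambda>n. P2 x (n + r)) sums (2/3 * GH x - (\<Sum>i<r. P2 x i))"
    using level2[of x] x0 by (simp add: sums_iff_shift)
  have s2: "(\<lambda>n. P2 y (n + k)) sums (2/3 * GH y - (\<Sum>i<k. P2 y i))"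
    using level2[of y] y0 by (simp add: sums_iff_shift)
  have s3: "(\<lambda>n. u (n + r) - u (n + k)) sums ((\<Sum>i<k. u i) - (\<Sum>i<r. u i))"
    using tele_diff[OF u0, of r d] d by simp
  have U: "(\<Sum>i<s. u i) = Tsum 0 s" for s
    unfolding u_def Tsum_def by (simp add: sum.atLeast1_atMost_eq)
  have S: "(\<lambda>n. c * ((P2 x (n + r) - P2 y (n + k)) + (u (n + r) - u (n + k)))) sums
      (c * (((2/3 * GH x - (\<Sum>i<r. P2 x i)) - (2/3 * GH y - (\<Sum>i<k. P2 y i))) + ((\<Sum>i<k. u i) - (\<Sum>i<r. u i))))"
    by (intro sums_mult sums_add sums_diff s1 s2 s3)
  have tm: "c * ((P2 x (n + r) - P2 y (n + k)) + (u (n + r) - u (n + k))) =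
      (H (real (Suc n) + \<alpha>) ^ 2 + shifted_harm 2 (real (Suc n) + \<alpha>))
              / ((real (Suc n) + real r) * (real (Suc n) + real k))" for n
  proof -
    have ex: "x + real (Suc (n + r)) = real (Suc n) + \<alpha>" "y + real (Suc (n + k)) = real (Suc n) + \<alpha>"
      by (simp_all add: x_def y_def)
    have a: "P2 x (n + r) + u (n + r) = fH (real (Suc n) + \<alpha>) / (real (Suc n) + real r)"
      unfolding P2_def u_def ex by (simp add: diff_divide_distrib)
    have b: "P2 y (n + k) + u (n + k) = fH (real (Suc n) + \<alpha>) / (real (Suc n) + real k)"
      unfolding P2_def u_def ex by (simp add: diff_divide_distrib)
    have "c * ((P2 x (n + r) - P2 y (n + k)) + (u (n + r) - u (n + k))) =
        c * (fH (real (Suc n) + \<alpha>) / (real (Suc n) + real r) - fH (real (Suc n) + \<alpha>) / (real (Suc n) + real k))"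
      unfolding a[symmetric] b[symmetric] by simp
    also have "\<dots> = fH (real (Suc n) + \<alpha>) / ((real (Suc n) + real r) * (real (Suc n) + real k))"
      unfolding c_def using kr by (intro alg3) auto
    finally show ?thesis by (simp add: fH_def)
  qed
  have er: "x * Sr = Tsum x r - (GH \<alpha> - GH x) / 3" unfolding Sr_def by (rule stmt_sum) (use x0 in \<open>auto simp: x_def\<close>)
  have ek: "y * Sk = Tsum y k - (GH \<alpha> - GH y) / 3" unfolding Sk_def by (rule stmt_sum) (use y0 in \<open>auto simp: y_def\<close>)
  have val: "c * (((2/3 * GH x - (\<Sum>i<r. P2 x i)) - (2/3 * GH y - (\<Sum>i<k. P2 y i))) + ((\<Sum>i<k. u i) - (\<Sum>i<r. u i)))
     = (real k - \<alpha>) / (real k - real r) * (GH y / y - Sk) + (\<alpha> - real r) / (real k - real r) * (GH x / x - Sr)"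
  proof -
    have 1: "(real k - \<alpha>) / (real k - real r) * (GH y / y - Sk) = c * (y * Sk - GH y)"
    proof -
      have "real k - \<alpha> = - y" by (simp add: y_def)
      thus ?thesis unfolding c_def using alg4[of y "real k - real r" "GH y" Sk] y0 kr by simp
    qed
    have 2: "(\<alpha> - real r) / (real k - real r) * (GH x / x - Sr) = c * (GH x - x * Sr)"
      unfolding c_def x_def[symmetric] using alg5[of x "real k - real r" "GH x" Sr] x0 kr by simp
    show ?thesis unfolding 1 2 er ek sumP2 U by (simp add: algebra_simps) (simp add: field_simps)
  qed
  have "(\<lambda>n. (H (real (Suc n) + \<alpha>) ^ 2 + shifted_harm 2 (real (Suc n) + \<alpha>))
              / ((real (Suc n) + real r) * (real (Suc n) + real k))) sums
     ((real k - \<alpha>) / (real k - real r) * (GH y / y - Sk) + (\<alpha> - real r) / (real k - real r) * (GH x / x - Sr))"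
    using S unfolding tm val .
  thus ?thesis unfolding GH_def x_def y_def Sr_def Sk_def .
qed


end
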